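(* Let $\mathfrak g$ be a finite-dimensional two-step solvable Lie algebra over a field $k$ of characteristic zero which is generated as a Lie algebra by two elements. Then $\mathfrak g$ admits a complete LR-structure.
   Context: Two-step solvable means $[[\mathfrak g,\mathfrak g],[\mathfrak g,\mathfrak g]]=0$. An LR-structure on a Lie algebra $\mathfrak g$ is a bilinear product $\cdot$ on its underlying space with $x\cdot(y\cdot z)=y\cdot(x\cdot z)$, $(x\cdot y)\cdot z=(x\cdot z)\cdot y$ and $x\cdot y-y\cdot x=[x,y]$ for all $x,y,z$; it is complete if all right multiplications $R(x)\colon y\mapsto y\cdot x$ are nilpotent. *)

theory Defs
  imports Complex_Main
begin

definition bilinear_map :: "('k::field \<Rightarrow> 'v::ab_group_add \<Rightarrow> 'v) \<Rightarrow> ('v \<Rightarrow> 'v \<Rightarrow> 'v) \<Rightarrow> bool" where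
  "bilinear_map sc f \<longleftrightarrow>
     (\<forall>x. Vector_Spaces.linear sc sc (f x)) \<and> (\<forall>y. Vector_Spaces.linear sc sc (\<lambda>x. f x y))"

definition lie_algebra :: "('k::field \<Rightarrow> 'v::ab_group_add \<Rightarrow> 'v) \<Rightarrow> ('v \<Rightarrow> 'v \<Rightarrow> 'v) \<Rightarrow> bool" where
  "lie_algebra sc br \<longleftrightarrow> vector_space sc \<and> bilinear_map sc br \<and>
     (\<forall>x. br x x = 0) \<and>
     (\<forall>x y z. br x (br y z) + br y (br z x) + br z (br x y) = 0)"

definition finite_dim :: "('k::field \<Rightarrow> 'v::ab_group_add \<Rightarrow> 'v) \<Rightarrow> bool" where
  "finite_dim sc \<longleftrightarrow> (\<exists>B. finite B \<and> module.span sc B = UNIV)"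

definition derived :: "('k::field \<Rightarrow> 'v::ab_group_add \<Rightarrow> 'v) \<Rightarrow> ('v \<Rightarrow> 'v \<Rightarrow> 'v) \<Rightarrow> 'v set" where
  "derived sc br = module.span sc {br x y | x y. True}"

definition two_step_solvable :: "('k::field \<Rightarrow> 'v::ab_group_add \<Rightarrow> 'v) \<Rightarrow> ('v \<Rightarrow> 'v \<Rightarrow> 'v) \<Rightarrow> bool" where
  "two_step_solvable sc br \<longleftrightarrow> (\<forall>x\<in>derived sc br. \<forall>y\<in>derived sc br. br x y = 0)"

definition lie_subalgebra :: "('k::field \<Rightarrow> 'v::ab_group_add \<Rightarrow> 'v) \<Rightarrow> ('v \<Rightarrow> 'v \<Rightarrow> 'v) \<Rightarrow> 'v set \<Rightarrow> bool" where
  "lie_subalgebra sc br S \<longleftrightarrow> module.subspace sc S \<and> (\<forall>x\<in>S. \<forall>y\<in>S. br x y \<in> S)"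

definition generated_subalgebra :: "('k::field \<Rightarrow> 'v::ab_group_add \<Rightarrow> 'v) \<Rightarrow> ('v \<Rightarrow> 'v \<Rightarrow> 'v) \<Rightarrow> 'v set \<Rightarrow> 'v set" where
  "generated_subalgebra sc br A = \<Inter>{S. lie_subalgebra sc br S \<and> A \<subseteq> S}"

definition LR_structure :: "('k::field \<Rightarrow> 'v::ab_group_add \<Rightarrow> 'v) \<Rightarrow> ('v \<Rightarrow> 'v \<Rightarrow> 'v) \<Rightarrow> ('v \<Rightarrow> 'v \<Rightarrow> 'v) \<Rightarrow> bool" where
  "LR_structure sc br p \<longleftrightarrow> bilinear_map sc p \<and>
     (\<forall>x y z. p x (p y z) = p y (p x z)) \<and>
     (\<forall>x y z. p (p x y) z = p (p x z) y) \<and>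
     (\<forall>x y. p x y - p y x = br x y)"

definition complete_LR_structure :: "('k::field \<Rightarrow> 'v::ab_group_add \<Rightarrow> 'v) \<Rightarrow> ('v \<Rightarrow> 'v \<Rightarrow> 'v) \<Rightarrow> ('v \<Rightarrow> 'v \<Rightarrow> 'v) \<Rightarrow> bool" where
  "complete_LR_structure sc br p \<longleftrightarrow> LR_structure sc br p \<and>
     (\<forall>x. \<exists>n. ((\<lambda>y. p y x) ^^ n) = (\<lambda>_. 0))"

end

theory Submission
  imports Defs
begin


locale lie_ctx = vector_space sc
  for sc :: "'k::field \<Rightarrow> 'v::ab_group_add \<Rightarrow> 'v" +
  fixes br :: "'v \<Rightarrow> 'v \<Rightarrow> 'v" and a b :: 'v and Bs :: "'v set"
  assumes br_add_r: "br x (y + z) = br x y + br x z"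
  and br_add_l: "br (x + y) z = br x z + br y z"
  and br_sc_r: "br x (sc r y) = sc r (br x y)"
  and br_sc_l: "br (sc r x) y = sc r (br x y)"
  and br_alt: "br x x = 0"
  and jacobi: "br x (br y z) + br y (br z x) + br z (br x y) = 0"
  and metab: "x \<in> derived sc br \<Longrightarrow> y \<in> derived sc br \<Longrightarrow> br x y = 0"
  and finB: "finite Bs" and spanB: "span Bs = UNIV"
  and gen: "generated_subalgebra sc br {a, b} = UNIV"
begin

lemma br_0_r[simp]: "br x 0 = 0"
  using br_add_r[of x 0 0] by simp
lemma br_0_l[simp]: "br 0 x = 0"
  using br_add_l[of 0 0 x] by simp
lemma br_neg_r[simp]: "br x (- y) = - br x y"
  using br_add_r[of x y "-y"] minus_unique[of "br x y" "br x (-y)"] by simp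
lemma br_neg_l[simp]: "br (- x) y = - br x y"
  using br_add_l[of x "-x" y] minus_unique[of "br x y" "br (-x) y"] by simp
lemma br_diff_r: "br x (y - z) = br x y - br x z"
  using br_add_r[of x y "-z"] by simp
lemma br_diff_l: "br (x - y) z = br x z - br y z"
  using br_add_l[of x "-y" z] by simp
lemma br_anti: "br y x = - br x y"
proof -
  have "0 = br (x+y) (x+y)" by (simp add: br_alt)
  also have "\<dots> = br x x + br x y + (br y x + br y y)" by (simp add: br_add_l br_add_r add.assoc)
  finally have "br x y + br y x = 0" by (simp add: br_alt)
  then show ?thesis using minus_unique[of "br x y" "br y x"] by simp
qed

definition A :: "'v \<Rightarrow> 'v" where "A x = br a x"
definition B :: "'v \<Rightarrow> 'v" where "B x = br b x"
definition c :: 'v where "c = br a b"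

inductive_set Ops :: "('v \<Rightarrow> 'v) set" where
  o_id: "(\<lambda>x. x) \<in> Ops"
| o_A: "S \<in> Ops \<Longrightarrow> (\<lambda>x. br a (S x)) \<in> Ops"
| o_B: "S \<in> Ops \<Longrightarrow> (\<lambda>x. br b (S x)) \<in> Ops"
| o_add: "S \<in> Ops \<Longrightarrow> R \<in> Ops \<Longrightarrow> (\<lambda>x. S x + R x) \<in> Ops"
| o_sc: "S \<in> Ops \<Longrightarrow> (\<lambda>x. sc r (S x)) \<in> Ops"

definition N :: "'v set" where "N = {S c | S. S \<in> Ops}"

lemma Ops_add: "S \<in> Ops \<Longrightarrow> S (x + y) = S x + S y"
  by (induction S rule: Ops.induct) (auto simp: br_add_r scale_right_distrib)
lemma Ops_sc: "S \<in> Ops \<Longrightarrow> S (sc r x) = sc r (S x)"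
  by (induction S rule: Ops.induct) (auto simp: br_sc_r scale_right_distrib scale_left_commute)
lemma Ops_0: "S \<in> Ops \<Longrightarrow> S 0 = 0"
  using Ops_sc[of S 0 0] by simp
lemma Ops_comp: "S \<in> Ops \<Longrightarrow> R \<in> Ops \<Longrightarrow> (\<lambda>x. S (R x)) \<in> Ops"
proof (induction S rule: Ops.induct)
  case o_id then show ?case by simp
next
  case (o_A S) then show ?case using Ops.o_A by blast
next
  case (o_B S) then show ?case using Ops.o_B by blast
next
  case (o_add S R') then show ?case using Ops.o_add by blast
next
  case (o_sc S r) then show ?case using Ops.o_sc by blast
qed

lemma derived_br: "br x y \<in> derived sc br"
  unfolding derived_def by (rule span_base) blast
lemma subspace_derived: "subspace (derived sc br)"
  unfolding derived_def by simp

lemma Ops_derived: "S \<in> Ops \<Longrightarrow> x \<in> derived sc br \<Longrightarrow> S x \<in> derived sc br"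
  by (induction S rule: Ops.induct)
     (auto simp: derived_br subspace_add[OF subspace_derived] subspace_scale[OF subspace_derived])

lemma N_derived: "m \<in> N \<Longrightarrow> m \<in> derived sc br"
  unfolding N_def c_def using Ops_derived derived_br by blast

lemma N_ab: "m \<in> N \<Longrightarrow> k \<in> N \<Longrightarrow> br m k = 0"
  using metab N_derived by blast

lemma c_N: "c \<in> N" unfolding N_def using o_id by force

lemma N_add: "m \<in> N \<Longrightarrow> k \<in> N \<Longrightarrow> m + k \<in> N"
  unfolding N_def using o_add by force
lemma N_sc: "m \<in> N \<Longrightarrow> sc r m \<in> N"
  unfolding N_def using o_sc by force
lemma N_0: "0 \<in> N"
  using N_sc[OF c_N, of 0] by simp
lemma N_neg: "m \<in> N \<Longrightarrow> - m \<in> N"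
  using N_sc[of m "-1"] by simp
lemma N_diff: "m \<in> N \<Longrightarrow> k \<in> N \<Longrightarrow> m - k \<in> N"
  using N_add N_neg by (metis diff_conv_add_uminus)
lemma subspace_N: "subspace N"
  unfolding subspace_def using N_0 N_add N_sc by blast
lemma A_N: "m \<in> N \<Longrightarrow> A m \<in> N"
  unfolding N_def A_def using o_A by force
lemma B_N: "m \<in> N \<Longrightarrow> B m \<in> N"
  unfolding N_def B_def using o_B by force
lemma Ops_N: "S \<in> Ops \<Longrightarrow> m \<in> N \<Longrightarrow> S m \<in> N"
  unfolding N_def using Ops_comp by force

lemma AB_comm: "m \<in> N \<Longrightarrow> A (B m) = B (A m)"
proof -
  assume m: "m \<in> N"
  have "br m c = 0" using N_ab[OF m c_N] .
  with jacobi[of a b m] have "br a (br b m) + br b (br m a) = 0"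
    unfolding c_def by simp
  then show ?thesis unfolding A_def B_def using br_anti[of m a]
    by (simp add: eq_neg_iff_add_eq_0)
qed

lemma Ops_comm_A: "S \<in> Ops \<Longrightarrow> m \<in> N \<Longrightarrow> S (A m) = A (S m)"
proof (induction S arbitrary: m rule: Ops.induct)
  case (o_B S) then show ?case using AB_comm[of "S m"] Ops_N[OF o_B.hyps(1) o_B.prems]
    by (simp add: A_def B_def)
qed (auto simp: A_def br_add_r br_sc_r)

lemma Ops_comm_B: "S \<in> Ops \<Longrightarrow> m \<in> N \<Longrightarrow> S (B m) = B (S m)"
proof (induction S arbitrary: m rule: Ops.induct)
  case (o_A S) then show ?case using AB_comm[of "S m"] Ops_N[OF o_A.hyps(1) o_A.prems]
    by (simp add: A_def B_def)
qed (auto simp: B_def br_add_r br_sc_r)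

lemma Ops_comm': "R \<in> Ops \<Longrightarrow> S \<in> Ops \<Longrightarrow> m \<in> N \<Longrightarrow> S (R m) = R (S m)"
proof (induction R arbitrary: m rule: Ops.induct)
  case (o_A R) then show ?case using Ops_comm_A[OF o_A.prems(1) Ops_N[OF o_A.hyps(1)]]
    by (simp add: A_def)
next
  case (o_B R) then show ?case using Ops_comm_B[OF o_B.prems(1) Ops_N[OF o_B.hyps(1)]]
    by (simp add: B_def)
qed (auto simp: Ops_add Ops_sc)

lemma Ops_comm: "S \<in> Ops \<Longrightarrow> R \<in> Ops \<Longrightarrow> m \<in> N \<Longrightarrow> S (R m) = R (S m)"
  using Ops_comm' by blast

lemma Ops_uniq: "S \<in> Ops \<Longrightarrow> R \<in> Ops \<Longrightarrow> S c = R c \<Longrightarrow> m \<in> N \<Longrightarrow> S m = R m"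
proof -
  assume S: "S \<in> Ops" and R: "R \<in> Ops" and e: "S c = R c" and m: "m \<in> N"
  then obtain P where P: "P \<in> Ops" "m = P c" unfolding N_def by auto
  have "S m = P (S c)" using Ops_comm[OF S P(1) c_N] P by simp
  also have "\<dots> = P (R c)" using e by simp
  also have "\<dots> = R m" using Ops_comm[OF R P(1) c_N] P by simp
  finally show ?thesis .
qed

definition T :: "'v \<Rightarrow> 'v \<Rightarrow> 'v" where "T m = (SOME S. S \<in> Ops \<and> S c = m)"

lemma T_prop: "m \<in> N \<Longrightarrow> T m \<in> Ops \<and> T m c = m"
proof -
  assume "m \<in> N"
  then obtain S where "S \<in> Ops" "S c = m" unfolding N_def by auto
  then show ?thesis unfolding T_def by (rule someI[of "\<lambda>S. S \<in> Ops \<and> S c = m", OF conjI])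
qed

definition mul :: "'v \<Rightarrow> 'v \<Rightarrow> 'v" where "mul m k = T m k"

lemma mul_N: "m \<in> N \<Longrightarrow> k \<in> N \<Longrightarrow> mul m k \<in> N"
  unfolding mul_def using T_prop Ops_N by blast
lemma mul_comm: "m \<in> N \<Longrightarrow> k \<in> N \<Longrightarrow> mul m k = mul k m"
  unfolding mul_def using T_prop Ops_comm c_N by metis
lemma mul_c: "m \<in> N \<Longrightarrow> mul m c = m"
  unfolding mul_def using T_prop by blast
lemma mul_add_r: "m \<in> N \<Longrightarrow> mul m (k + l) = mul m k + mul m l"
  unfolding mul_def using T_prop Ops_add by blast
lemma mul_sc_r: "m \<in> N \<Longrightarrow> mul m (sc r k) = sc r (mul m k)"
  unfolding mul_def using T_prop Ops_sc by blast
lemma mul_add_l: "m \<in> N \<Longrightarrow> m' \<in> N \<Longrightarrow> k \<in> N \<Longrightarrow> mul (m + m') k = mul m k + mul m' k"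
proof -
  assume m: "m \<in> N" and m': "m' \<in> N" and k: "k \<in> N"
  have S: "(\<lambda>x. T m x + T m' x) \<in> Ops" using T_prop[OF m] T_prop[OF m'] o_add by blast
  have "T (m + m') k = (\<lambda>x. T m x + T m' x) k"
    by (rule Ops_uniq[OF T_prop[THEN conjunct1] S _ k]) (use T_prop m m' N_add in auto)
  then show ?thesis unfolding mul_def by simp
qed
lemma mul_sc_l: "m \<in> N \<Longrightarrow> k \<in> N \<Longrightarrow> mul (sc r m) k = sc r (mul m k)"
proof -
  assume m: "m \<in> N" and k: "k \<in> N"
  have S: "(\<lambda>x. sc r (T m x)) \<in> Ops" using T_prop[OF m] o_sc by blast
  have "T (sc r m) k = (\<lambda>x. sc r (T m x)) k"
    by (rule Ops_uniq[OF T_prop[THEN conjunct1] S _ k]) (use T_prop m N_sc in auto)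
  then show ?thesis unfolding mul_def by simp
qed
lemma mul_A: "m \<in> N \<Longrightarrow> k \<in> N \<Longrightarrow> mul m (A k) = A (mul m k)"
  unfolding mul_def using T_prop Ops_comm_A by blast
lemma mul_B: "m \<in> N \<Longrightarrow> k \<in> N \<Longrightarrow> mul m (B k) = B (mul m k)"
  unfolding mul_def using T_prop Ops_comm_B by blast

end


context lie_ctx begin

definition Wset :: "'v set" where "Wset = {sc \<alpha> a + sc \<beta> b + m | \<alpha> \<beta> m. m \<in> N}"

lemma br_in_N:
  assumes m: "m \<in> N" and m': "m' \<in> N"
  shows "br (sc \<alpha> a + sc \<beta> b + m) (sc \<alpha>' a + sc \<beta>' b + m') \<in> N"
proof -
  have e1: "br b a = - c" using br_anti[of a b] by (simp add: c_def)
  have e2: "br m a = - A m" using br_anti[of a m] by (simp add: A_def)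
  have e3: "br m b = - B m" using br_anti[of b m] by (simp add: B_def)
  have e4: "br m m' = 0" using N_ab[OF m m'] .
  have e5: "br a m' = A m'" "br b m' = B m'" "br a b = c" by (simp_all add: A_def B_def c_def)
  show ?thesis
    by (simp add: br_add_l br_add_r br_sc_l br_sc_r br_alt e1 e2 e3 e4 e5)
       (intro N_add N_diff N_sc N_neg A_N B_N c_N m m')
qed

lemma Wset_mem: "m \<in> N \<Longrightarrow> sc \<alpha> a + sc \<beta> b + m \<in> Wset"
  unfolding Wset_def by blast

lemma Wset_E: "x \<in> Wset \<Longrightarrow> (\<And>\<alpha> \<beta> m. m \<in> N \<Longrightarrow> x = sc \<alpha> a + sc \<beta> b + m \<Longrightarrow> P) \<Longrightarrow> P"
  unfolding Wset_def by blast

lemma Wset_sub: "lie_subalgebra sc br Wset"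
  unfolding lie_subalgebra_def
proof (intro conjI ballI)
  show "subspace Wset"
    unfolding subspace_def
  proof (intro conjI ballI allI)
    show "0 \<in> Wset"
      using Wset_mem[OF N_0, of 0 0] by simp
  next
    fix x y assume "x \<in> Wset" "y \<in> Wset"
    then obtain \<alpha> \<beta> m \<alpha>' \<beta>' m' where "m \<in> N" "m' \<in> N" "x = sc \<alpha> a + sc \<beta> b + m" "y = sc \<alpha>' a + sc \<beta>' b + m'"
      by (metis Wset_E)
    moreover have "x + y = sc (\<alpha> + \<alpha>') a + sc (\<beta> + \<beta>') b + (m + m')"
      using calculation by (simp add: scale_left_distrib algebra_simps)
    ultimately show "x + y \<in> Wset" using Wset_mem N_add by metis
  next
    fix r x assume "x \<in> Wset"
    then obtain \<alpha> \<beta> m where "m \<in> N" "x = sc \<alpha> a + sc \<beta> b + m"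
      by (metis Wset_E)
    moreover have "sc r x = sc (r * \<alpha>) a + sc (r * \<beta>) b + sc r m"
      using calculation by (simp add: scale_right_distrib)
    ultimately show "sc r x \<in> Wset" using Wset_mem N_sc by metis
  qed
next
  fix x y assume "x \<in> Wset" "y \<in> Wset"
  then obtain \<alpha> \<beta> m \<alpha>' \<beta>' m' where "m \<in> N" "m' \<in> N" "x = sc \<alpha> a + sc \<beta> b + m" "y = sc \<alpha>' a + sc \<beta>' b + m'"
    by (metis Wset_E)
  then have "br x y \<in> N" using br_in_N by simp
  then show "br x y \<in> Wset" using Wset_mem[of "br x y" 0 0] by simp
qed

lemma decomp: "\<exists>\<alpha> \<beta> m. m \<in> N \<and> x = sc \<alpha> a + sc \<beta> b + m"
proof -
  have "a \<in> Wset" using Wset_mem[OF N_0, of 1 0] by simp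
  moreover have "b \<in> Wset" using Wset_mem[OF N_0, of 0 1] by simp
  ultimately have "generated_subalgebra sc br {a, b} \<subseteq> Wset"
    unfolding generated_subalgebra_def using Wset_sub by blast
  then have "x \<in> Wset" using gen by auto
  then show ?thesis unfolding Wset_def by blast
qed

end


context lie_ctx begin

definition FB :: "'v set" where "FB = (SOME B. B \<subseteq> Bs \<and> independent B \<and> Bs \<subseteq> span B)"

lemma FB_prop: "FB \<subseteq> Bs \<and> independent FB \<and> Bs \<subseteq> span FB"
  unfolding FB_def by (rule someI_ex) (meson maximal_independent_subset)

sublocale fd: finite_dimensional_vector_space sc FB
proof
  show "finite FB" using FB_prop finB finite_subset by blast
  show "independent FB" using FB_prop by blast
  show "span FB = UNIV"
    using FB_prop spanB span_mono span_span by (metis span_minimal subset_antisym subset_UNIV subspace_span)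
qed

abbreviation Bp :: "nat \<Rightarrow> 'v \<Rightarrow> 'v" where "Bp n \<equiv> B ^^ n"

lemma B_add: "B (x + y) = B x + B y" by (simp add: B_def br_add_r)
lemma B_sc: "B (sc r x) = sc r (B x)" by (simp add: B_def br_sc_r)
lemma A_add: "A (x + y) = A x + A y" by (simp add: A_def br_add_r)
lemma A_sc: "A (sc r x) = sc r (A x)" by (simp add: A_def br_sc_r)
lemma A_0[simp]: "A 0 = 0" by (simp add: A_def)
lemma B_0[simp]: "B 0 = 0" by (simp add: B_def)
lemma A_neg: "A (- x) = - A x" by (simp add: A_def)
lemma B_neg: "B (- x) = - B x" by (simp add: B_def)
lemma A_diff: "A (x - y) = A x - A y" by (simp add: A_def br_diff_r)
lemma B_diff: "B (x - y) = B x - B y" by (simp add: B_def br_diff_r)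

lemma Bp_add: "Bp n (x + y) = Bp n x + Bp n y"
  by (induction n) (simp_all add: B_add)
lemma Bp_sc: "Bp n (sc r x) = sc r (Bp n x)"
  by (induction n) (simp_all add: B_sc)
lemma Bp_0[simp]: "Bp n 0 = 0"
  by (induction n) simp_all
lemma Bp_diff: "Bp n (x - y) = Bp n x - Bp n y"
  by (induction n) (simp_all add: B_diff)
lemma Bp_N: "x \<in> N \<Longrightarrow> Bp n x \<in> N"
  by (induction n) (simp_all add: B_N)

definition Im :: "nat \<Rightarrow> 'v set" where "Im n = Bp n ` N"
definition Kr :: "nat \<Rightarrow> 'v set" where "Kr n = {x \<in> N. Bp n x = 0}"

lemma subspace_Im: "subspace (Im n)"
  unfolding subspace_def Im_def
proof (intro conjI ballI allI)
  show "0 \<in> Bp n ` N" using N_0 by (metis Bp_0 image_eqI)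
next
  fix x y assume "x \<in> Bp n ` N" "y \<in> Bp n ` N"
  then obtain u v where "u \<in> N" "v \<in> N" "x = Bp n u" "y = Bp n v" by blast
  then show "x + y \<in> Bp n ` N" using N_add Bp_add by (metis image_eqI)
next
  fix r x assume "x \<in> Bp n ` N"
  then obtain u where "u \<in> N" "x = Bp n u" by blast
  then show "sc r x \<in> Bp n ` N" using N_sc Bp_sc by (metis image_eqI)
qed

lemma subspace_Kr: "subspace (Kr n)"
  unfolding subspace_def Kr_def using N_0 N_add N_sc Bp_add Bp_sc by auto

lemma Im_N: "Im n \<subseteq> N" unfolding Im_def using Bp_N by blast

lemma Im_Suc: "Im (Suc n) = B ` Im n"
  unfolding Im_def by (simp add: image_comp)

lemma Im_Suc_sub: "Im (Suc n) \<subseteq> Im n"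
  unfolding Im_def using B_N by (auto simp: funpow_Suc_right simp del: funpow.simps)

lemma Kr_Suc_sub: "Kr n \<subseteq> Kr (Suc n)"
  unfolding Kr_def by auto

lemma Im_stab: "\<exists>K. \<forall>j. Im (K + j) = Im K"
proof -
  obtain K where K: "\<forall>n. dim (Im K) \<le> dim (Im n)"
    using ex_has_least_nat[of "\<lambda>n. True" 0 "\<lambda>n. dim (Im n)"] by blast
  have s: "Im (Suc K) = Im K"
    using fd.subspace_dim_equal[OF subspace_Im subspace_Im Im_Suc_sub] K by blast
  have "Im (K + j) = Im K" for j
  proof (induction j)
    case (Suc j)
    have "Im (K + Suc j) = B ` Im (K + j)" using Im_Suc by simp
    also have "\<dots> = Im (Suc K)" using Suc Im_Suc by simp
    finally show ?case using s by simp
  qed simp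
  then show ?thesis by blast
qed

lemma Kr_stab: "\<exists>K. \<forall>j. Kr (K + j) = Kr K"
proof -
  obtain K where K: "\<forall>n. fd.dimension - dim (Kr K) \<le> fd.dimension - dim (Kr n)"
    using ex_has_least_nat[of "\<lambda>n. True" 0 "\<lambda>n. fd.dimension - dim (Kr n)"] by blast
  have "dim (Kr (Suc K)) \<le> dim (Kr K)"
    using K[rule_format, of "Suc K"] fd.dim_subset_UNIV[of "Kr (Suc K)"] fd.dim_subset_UNIV[of "Kr K"]
    by linarith
  then have s: "Kr (Suc K) = Kr K"
    using fd.subspace_dim_equal[OF subspace_Kr subspace_Kr Kr_Suc_sub] by (metis)
  have "x \<in> Kr (K + j) \<Longrightarrow> x \<in> Kr K" for j x
  proof (induction j arbitrary: x)
    case (Suc j)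
    then have x: "x \<in> N" "Bp (K + j) (B x) = 0"
      unfolding Kr_def by (auto simp: funpow_Suc_right simp del: funpow.simps)
    then have "B x \<in> Kr (K + j)" unfolding Kr_def using B_N by auto
    then have "B x \<in> Kr K" using Suc.IH by blast
    then have "x \<in> Kr (Suc K)" unfolding Kr_def using x by (auto simp: funpow_Suc_right simp del: funpow.simps)
    then show ?case using s by simp
  qed simp
  moreover have "Kr K \<subseteq> Kr (K + j)" for j
    by (induction j) (use Kr_Suc_sub in auto)
  ultimately show ?thesis by blast
qed

definition KK :: nat where "KK = (SOME K. (\<forall>j. Im (K + j) = Im K) \<and> (\<forall>j. Kr (K + j) = Kr K))"

lemma KK_prop: "(\<forall>j. Im (KK + j) = Im KK) \<and> (\<forall>j. Kr (KK + j) = Kr KK)"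
proof -
  obtain K1 where K1: "\<forall>j. Im (K1 + j) = Im K1" using Im_stab by blast
  obtain K2 where K2: "\<forall>j. Kr (K2 + j) = Kr K2" using Kr_stab by blast
  have "(\<forall>j. Im (K1 + K2 + j) = Im (K1 + K2)) \<and> (\<forall>j. Kr (K1 + K2 + j) = Kr (K1 + K2))"
    using K1 K2 by (metis add.assoc add.commute)
  then show ?thesis unfolding KK_def by (rule someI)
qed

abbreviation "IK \<equiv> Im KK"

lemma IK_N: "y \<in> IK \<Longrightarrow> y \<in> N" using Im_N by blast

lemma IK_self: "Bp KK ` IK = IK"
proof -
  have "Bp KK ` IK = Im (KK + KK)" unfolding Im_def by (simp add: image_comp funpow_add)
  then show ?thesis using KK_prop by simp
qed

lemma IK_B: "B ` IK = IK"
  using Im_Suc[of KK] KK_prop by (metis add_Suc_right add_0_right)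

lemma IK_inj: "y \<in> IK \<Longrightarrow> Bp KK y = 0 \<Longrightarrow> y = 0"
proof -
  assume y: "y \<in> IK" and e: "Bp KK y = 0"
  then obtain z where z: "z \<in> N" "y = Bp KK z" unfolding Im_def by blast
  then have "z \<in> Kr (KK + KK)" unfolding Kr_def using e by (simp add: funpow_add)
  then have "z \<in> Kr KK" using KK_prop by simp
  then show "y = 0" using z unfolding Kr_def by simp
qed

definition E :: "'v \<Rightarrow> 'v" where "E x = (THE y. y \<in> IK \<and> Bp KK y = Bp KK x)"

lemma E_uniq0: "y \<in> IK \<Longrightarrow> y' \<in> IK \<Longrightarrow> Bp KK y = Bp KK y' \<Longrightarrow> y = y'"
proof -
  assume y: "y \<in> IK" "y' \<in> IK" "Bp KK y = Bp KK y'"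
  have "y - y' \<in> IK" using y subspace_diff[OF subspace_Im] by blast
  moreover have "Bp KK (y - y') = 0" using y by (simp add: Bp_diff)
  ultimately show ?thesis using IK_inj by fastforce
qed

lemma E_spec: "x \<in> N \<Longrightarrow> E x \<in> IK \<and> Bp KK (E x) = Bp KK x"
proof -
  assume x: "x \<in> N"
  have "Bp KK x \<in> IK" unfolding Im_def using x by blast
  then obtain y where y: "y \<in> IK" "Bp KK y = Bp KK x" using IK_self by (metis imageE)
  show ?thesis unfolding E_def
    by (rule theI[of _ y]) (use y E_uniq0 in auto)
qed

lemma E_uniq: "x \<in> N \<Longrightarrow> y \<in> IK \<Longrightarrow> Bp KK y = Bp KK x \<Longrightarrow> E x = y"
  using E_spec E_uniq0 by metis

definition F :: "'v \<Rightarrow> 'v" where "F x = x - E x"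

lemma E_N: "x \<in> N \<Longrightarrow> E x \<in> N" using E_spec IK_N by blast
lemma F_N: "x \<in> N \<Longrightarrow> F x \<in> N" unfolding F_def using E_N N_diff by blast
lemma E_IK: "x \<in> N \<Longrightarrow> E x \<in> IK" using E_spec by blast
lemma E_idem: "y \<in> IK \<Longrightarrow> E y = y" using E_uniq IK_N by blast
lemma BpF: "x \<in> N \<Longrightarrow> Bp KK (F x) = 0" unfolding F_def using E_spec by (simp add: Bp_diff)
lemma E_F: "x \<in> N \<Longrightarrow> E (F x) = 0"
  using E_uniq[OF F_N _ ] BpF subspace_0[OF subspace_Im] by (metis Bp_0)
lemma E_E: "x \<in> N \<Longrightarrow> E (E x) = E x" using E_idem E_IK by blast
lemma F_E: "x \<in> N \<Longrightarrow> F (E x) = 0" unfolding F_def using E_E by simp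
lemma F_F: "x \<in> N \<Longrightarrow> F (F x) = F x" unfolding F_def using E_F F_def by simp
lemma E_F_sum: "E x + F x = x" unfolding F_def by simp

lemma E_add: "x \<in> N \<Longrightarrow> y \<in> N \<Longrightarrow> E (x + y) = E x + E y"
  by (rule E_uniq) (use E_spec N_add subspace_add[OF subspace_Im] Bp_add in auto)
lemma E_sc: "x \<in> N \<Longrightarrow> E (sc r x) = sc r (E x)"
  by (rule E_uniq) (use E_spec N_sc subspace_scale[OF subspace_Im] Bp_sc in auto)
lemma F_add: "x \<in> N \<Longrightarrow> y \<in> N \<Longrightarrow> F (x + y) = F x + F y"
  unfolding F_def using E_add by (simp add: algebra_simps)
lemma F_sc: "x \<in> N \<Longrightarrow> F (sc r x) = sc r (F x)"
  unfolding F_def using E_sc by (simp add: scale_right_diff_distrib)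
lemma E_0[simp]: "E 0 = 0" using E_sc[OF N_0, of 0] by simp
lemma F_0[simp]: "F 0 = 0" unfolding F_def by simp

lemma E_comm_gen:
  assumes SN: "\<And>x. x \<in> N \<Longrightarrow> S x \<in> N"
    and Sadd: "\<And>x y. x \<in> N \<Longrightarrow> y \<in> N \<Longrightarrow> S (x + y) = S x + S y"
    and SB: "\<And>x. x \<in> N \<Longrightarrow> S (B x) = B (S x)"
    and x: "x \<in> N"
  shows "S (E x) = E (S x)"
proof -
  have Bp_S: "z \<in> N \<Longrightarrow> S (Bp n z) = Bp n (S z)" for z n
    by (induction n) (simp_all add: SB Bp_N)
  obtain z where z: "z \<in> N" "E x = Bp KK z" using E_IK[OF x] unfolding Im_def by blast
  have "S (E x) \<in> IK" using z Bp_S SN unfolding Im_def by auto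
  moreover have "Bp KK (S (E x)) = Bp KK (S x)"
    using Bp_S E_N E_spec x by metis
  ultimately show ?thesis using E_uniq[OF SN[OF x]] by metis
qed

lemma F_comm_gen:
  assumes SN: "\<And>x. x \<in> N \<Longrightarrow> S x \<in> N"
    and Sadd: "\<And>x y. x \<in> N \<Longrightarrow> y \<in> N \<Longrightarrow> S (x + y) = S x + S y"
    and SB: "\<And>x. x \<in> N \<Longrightarrow> S (B x) = B (S x)"
    and x: "x \<in> N"
  shows "S (F x) = F (S x)"
proof -
  have "S x = S (E x) + S (F x)" using Sadd[OF E_N[OF x] F_N[OF x]] E_F_sum by metis
  then show ?thesis using E_comm_gen[OF assms] unfolding F_def by (simp add: algebra_simps)
qed

lemma E_A: "x \<in> N \<Longrightarrow> A (E x) = E (A x)"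
  by (rule E_comm_gen) (auto simp: A_N A_add AB_comm)
lemma F_A: "x \<in> N \<Longrightarrow> A (F x) = F (A x)"
  by (rule F_comm_gen) (auto simp: A_N A_add AB_comm)
lemma E_B: "x \<in> N \<Longrightarrow> B (E x) = E (B x)"
  by (rule E_comm_gen) (auto simp: B_N B_add)
lemma F_B: "x \<in> N \<Longrightarrow> B (F x) = F (B x)"
  by (rule F_comm_gen) (auto simp: B_N B_add)
lemma E_mul: "m \<in> N \<Longrightarrow> x \<in> N \<Longrightarrow> mul m (E x) = E (mul m x)"
  by (rule E_comm_gen[where S="mul m"]) (auto simp: mul_N mul_add_r mul_B)
lemma F_mul: "m \<in> N \<Longrightarrow> x \<in> N \<Longrightarrow> mul m (F x) = F (mul m x)"
  by (rule F_comm_gen[where S="mul m"]) (auto simp: mul_N mul_add_r mul_B)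

definition w :: 'v where "w = (SOME y. y \<in> IK \<and> B y = E c)"

lemma w_prop: "w \<in> IK \<and> B w = E c"
proof -
  have "E c \<in> IK" using E_IK c_N by blast
  then obtain y where "y \<in> IK" "B y = E c" using IK_B by (metis imageE)
  then show ?thesis unfolding w_def by (rule someI[of _ y, OF conjI])
qed

lemma w_N: "w \<in> N" using w_prop IK_N by blast
lemma Bw: "B w = E c" using w_prop by blast
lemma Ew: "E w = w" using w_prop E_idem by blast
lemma Fw: "F w = 0" unfolding F_def using Ew by simp

end


context lie_ctx begin

lemma mul_left_comm: "m \<in> N \<Longrightarrow> l \<in> N \<Longrightarrow> k \<in> N \<Longrightarrow> mul m (mul l k) = mul l (mul m k)"
  unfolding mul_def using T_prop[of m] T_prop[of l] Ops_comm[of "T m" "T l" k] by blast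

lemma E_neg: "x \<in> N \<Longrightarrow> E (- x) = - E x"
  using E_sc[of x "-1"] by simp
lemma F_neg: "x \<in> N \<Longrightarrow> F (- x) = - F x"
  unfolding F_def using E_neg by simp
lemma E_diff: "x \<in> N \<Longrightarrow> y \<in> N \<Longrightarrow> E (x - y) = E x - E y"
  using E_add[of x "-y"] E_neg[of y] N_neg[of y] by (simp only: diff_conv_add_uminus)
lemma F_diff: "x \<in> N \<Longrightarrow> y \<in> N \<Longrightarrow> F (x - y) = F x - F y"
  unfolding F_def using E_diff by (simp add: algebra_simps)
lemma mul_neg_r: "m \<in> N \<Longrightarrow> mul m (- k) = - mul m k"
  using mul_sc_r[of m "-1" k] by simp
lemma mul_diff_r: "m \<in> N \<Longrightarrow> mul m (k - l) = mul m k - mul m l"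
  using mul_add_r[of m k "-l"] mul_neg_r[of m l] by (simp only: diff_conv_add_uminus)
lemma mul_0_r: "m \<in> N \<Longrightarrow> mul m 0 = 0"
  using mul_sc_r[of m 0 0] by simp

lemma E_A': "x \<in> N \<Longrightarrow> E (A x) = A (E x)" using E_A by simp
lemma F_A': "x \<in> N \<Longrightarrow> F (A x) = A (F x)" using F_A by simp
lemma E_B': "x \<in> N \<Longrightarrow> E (B x) = B (E x)" using E_B by simp
lemma F_B': "x \<in> N \<Longrightarrow> F (B x) = B (F x)" using F_B by simp
lemma B_A': "x \<in> N \<Longrightarrow> B (A x) = A (B x)" using AB_comm by simp
lemma mul_E': "m \<in> N \<Longrightarrow> x \<in> N \<Longrightarrow> mul m (E x) = E (mul m x)" using E_mul by simp
lemma mul_F': "m \<in> N \<Longrightarrow> x \<in> N \<Longrightarrow> mul m (F x) = F (mul m x)" using F_mul by simp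

lemmas opsimps = A_add A_sc A_diff A_neg A_0 B_add B_sc B_diff B_neg B_0
  E_add E_sc E_diff E_neg E_0 F_add F_sc F_diff F_neg F_0
  mul_add_r mul_sc_r mul_diff_r mul_neg_r mul_0_r
  E_A' F_A' E_B' F_B' B_A' mul_E' mul_F' mul_A mul_B mul_left_comm mul_c
  E_E F_F E_F F_E
  A_N B_N E_N F_N mul_N N_add N_diff N_sc N_neg N_0 c_N w_N

end

locale nondeg = lie_ctx sc br a b Bs
  for sc :: "'k::field \<Rightarrow> 'v::ab_group_add \<Rightarrow> 'v" and br a b Bs +
  assumes indep: "sc \<alpha> a + sc \<beta> b \<in> N \<Longrightarrow> \<alpha> = 0 \<and> \<beta> = 0"
begin

definition cf :: "'v \<Rightarrow> 'k \<times> 'k \<times> 'v" where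
  "cf x = (SOME t. snd (snd t) \<in> N \<and> x = sc (fst t) a + sc (fst (snd t)) b + snd (snd t))"
definition ca where "ca x = fst (cf x)"
definition cb where "cb x = fst (snd (cf x))"
definition nx where "nx x = snd (snd (cf x))"

lemma cf_spec: "nx x \<in> N \<and> x = sc (ca x) a + sc (cb x) b + nx x"
proof -
  obtain \<alpha> \<beta> m where h: "m \<in> N" "x = sc \<alpha> a + sc \<beta> b + m" using decomp by blast
  have "\<exists>t. snd (snd t) \<in> N \<and> x = sc (fst t) a + sc (fst (snd t)) b + snd (snd t)"
    by (rule exI[of _ "(\<alpha>, \<beta>, m)"]) (simp only: fst_conv snd_conv h)
  from someI_ex[OF this] show ?thesis unfolding ca_def cb_def nx_def cf_def .
qed

lemma nx_N[simp]: "nx x \<in> N" using cf_spec[THEN conjunct1] .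
lemma cf_eq: "x = sc (ca x) a + sc (cb x) b + nx x" using cf_spec[THEN conjunct2] .

lemma ab_rearr: "(p::'a::ab_group_add) + q + n = r + s + m \<Longrightarrow> (p - r) + (q - s) = m - n"
proof -
  assume h: "p + q + n = r + s + m"
  have "(p - r) + (q - s) = (p + q + n) - (r + s + m) + (m - n)" by (simp add: algebra_simps)
  then show ?thesis using h by simp
qed

lemma cf_uniq:
  assumes m: "m \<in> N" and x: "x = sc \<alpha> a + sc \<beta> b + m"
  shows "ca x = \<alpha> \<and> cb x = \<beta> \<and> nx x = m"
proof -
  have e: "sc (ca x) a + sc (cb x) b + nx x = sc \<alpha> a + sc \<beta> b + m" by (rule trans[OF cf_eq[of x, symmetric] x])
  have "sc (ca x - \<alpha>) a + sc (cb x - \<beta>) b = m - nx x"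
    unfolding scale_left_diff_distrib by (rule ab_rearr[OF e])
  then have "sc (ca x - \<alpha>) a + sc (cb x - \<beta>) b \<in> N" using N_diff m nx_N by metis
  then have "ca x = \<alpha> \<and> cb x = \<beta>" using indep by fastforce
  then show ?thesis using e by simp
qed

lemma cf_N: "k \<in> N \<Longrightarrow> ca k = 0 \<and> cb k = 0 \<and> nx k = k"
  by (rule cf_uniq) simp_all

lemma ca_N[simp]: "k \<in> N \<Longrightarrow> ca k = 0" using cf_N by blast
lemma cb_N[simp]: "k \<in> N \<Longrightarrow> cb k = 0" using cf_N by blast
lemma nx_Nid[simp]: "k \<in> N \<Longrightarrow> nx k = k" using cf_N by blast

lemma cf_add: "ca (x + y) = ca x + ca y \<and> cb (x + y) = cb x + cb y \<and> nx (x + y) = nx x + nx y"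
proof (rule cf_uniq)
  show "nx x + nx y \<in> N" using N_add nx_N by blast
  have ex: "x = sc (ca x) a + sc (cb x) b + nx x" using cf_eq .
  have ey: "y = sc (ca y) a + sc (cb y) b + nx y" using cf_eq .
  have "x + y = (sc (ca x) a + sc (cb x) b + nx x) + (sc (ca y) a + sc (cb y) b + nx y)"
    by (rule arg_cong2[where f="(+)"], rule ex, rule ey)
  also have "\<dots> = sc (ca x + ca y) a + sc (cb x + cb y) b + (nx x + nx y)"
    by (simp add: scale_left_distrib add_ac)
  finally show "x + y = sc (ca x + ca y) a + sc (cb x + cb y) b + (nx x + nx y)" .
qed

lemma cf_sc: "ca (sc r x) = r * ca x \<and> cb (sc r x) = r * cb x \<and> nx (sc r x) = sc r (nx x)"
proof (rule cf_uniq)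
  show "sc r (nx x) \<in> N" using N_sc nx_N by blast
  have e: "x = sc (ca x) a + sc (cb x) b + nx x" using cf_eq .
  have "sc r x = sc r (sc (ca x) a + sc (cb x) b + nx x)"
    by (rule arg_cong[where f="sc r"], rule e)
  then show "sc r x = sc (r * ca x) a + sc (r * cb x) b + sc r (nx x)"
    by (simp only: scale_right_distrib scale_scale)
qed

end


context lie_ctx begin
lemma E_mul'': "m \<in> N \<Longrightarrow> x \<in> N \<Longrightarrow> E (mul m x) = mul m (E x)" using E_mul by simp
lemma F_mul'': "m \<in> N \<Longrightarrow> x \<in> N \<Longrightarrow> F (mul m x) = mul m (F x)" using F_mul by simp
lemma mul_Ec: "m \<in> N \<Longrightarrow> mul m (E c) = E m" using E_mul[OF _ c_N] mul_c by simp
lemma mul_Fc: "m \<in> N \<Longrightarrow> mul m (F c) = F m" using F_mul[OF _ c_N] mul_c by simp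
lemma mul_comm': "m \<in> N \<Longrightarrow> k \<in> N \<Longrightarrow> mul m k = mul k m" using mul_comm by simp

lemma mul_neg_l: "m \<in> N \<Longrightarrow> k \<in> N \<Longrightarrow> mul (- m) k = - mul m k"
  using mul_sc_l[of m k "-1"] by simp
lemma mul_diff_l: "m \<in> N \<Longrightarrow> m' \<in> N \<Longrightarrow> k \<in> N \<Longrightarrow> mul (m - m') k = mul m k - mul m' k"
  using mul_add_l[of m "-m'" k] mul_neg_l[of m' k] N_neg[of m'] by (simp only: diff_conv_add_uminus)
lemma mul_0_l: "k \<in> N \<Longrightarrow> mul 0 k = 0"
  using mul_sc_l[OF c_N, of k 0] by simp

lemma mul_c_l: "m \<in> N \<Longrightarrow> mul c m = m" using mul_comm[OF c_N] mul_c by simp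
lemma mul_Ec_l: "m \<in> N \<Longrightarrow> mul (E c) m = E m" using mul_comm[OF E_N[OF c_N]] mul_Ec by simp
lemma mul_Fc_l: "m \<in> N \<Longrightarrow> mul (F c) m = F m" using mul_comm[OF F_N[OF c_N]] mul_Fc by simp
lemma mul_wF: "k \<in> N \<Longrightarrow> mul w (F k) = 0"
proof -
  assume k: "k \<in> N"
  have "mul w (F k) = F (mul w k)" using F_mul[OF w_N k] by simp
  also have "\<dots> = F (mul k w)" using mul_comm[OF w_N k] by simp
  also have "\<dots> = mul k (F w)" using F_mul[OF k w_N] by simp
  finally show ?thesis using Fw mul_0_r[OF k] by simp
qed
lemma mul_Fw: "k \<in> N \<Longrightarrow> mul (F k) w = 0"
  using mul_wF mul_comm[OF F_N w_N] by simp

lemma F_mul_w: "k \<in> N \<Longrightarrow> F (mul w k) = 0" using mul_wF F_mul[OF w_N] by simp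
lemma F_mul_w': "k \<in> N \<Longrightarrow> F (mul k w) = 0" using F_mul_w mul_comm[OF w_N] by simp
lemma mul_E_l: "k \<in> N \<Longrightarrow> m \<in> N \<Longrightarrow> mul (E k) m = E (mul k m)"
  using mul_comm[OF E_N] E_mul mul_comm by metis
lemma mul_F_l: "k \<in> N \<Longrightarrow> m \<in> N \<Longrightarrow> mul (F k) m = F (mul k m)"
  using mul_comm[OF F_N] F_mul mul_comm by metis
lemma mul_A_l: "k \<in> N \<Longrightarrow> m \<in> N \<Longrightarrow> mul (A k) m = A (mul k m)"
  using mul_comm[OF A_N] mul_A mul_comm by metis
lemma mul_B_l: "k \<in> N \<Longrightarrow> m \<in> N \<Longrightarrow> mul (B k) m = B (mul k m)"
  using mul_comm[OF B_N] mul_B mul_comm by metis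

lemmas ops3 = F_mul_w F_mul_w' mul_E_l mul_F_l mul_A_l mul_B_l mul_E' mul_F'
lemmas ops2 = mul_c_l mul_add_l mul_sc_l mul_neg_l mul_diff_l mul_0_l A_add A_sc A_diff A_neg A_0 B_add B_sc B_diff B_neg B_0
  E_add E_sc E_diff E_neg E_0 F_add F_sc F_diff F_neg F_0
  mul_add_r mul_sc_r mul_diff_r mul_neg_r mul_0_r
  E_A' F_A' E_B' F_B' B_A' mul_A mul_B mul_left_comm mul_comm' mul_c mul_Ec mul_Fc
  E_E F_F E_F F_E Bw Ew Fw
  A_N B_N E_N F_N mul_N N_add N_diff N_sc N_neg N_0 c_N w_N
end

context nondeg begin

definition Xa where "Xa x = - sc (ca x) (A w) - sc (cb x) (E c)"
definition Xb where "Xb x = sc (ca x) (F c) - B (F (nx x))"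
definition Y where "Y x k = sc (ca x) (A k) + sc (cb x) (B (E k)) - A (B (F (mul (nx x) k)))"
definition Pa where "Pa y = - sc (ca y) (A w) + sc (cb y) (F c) + A (nx y)"
definition Pb where "Pb y = - sc (ca y) (E c) + B (E (nx y))"
definition Q where "Q y k = - sc (cb y) (B (F k)) - A (B (F (mul (nx y) k)))"
definition prd where "prd x y = sc (ca y) (Xa x) + sc (cb y) (Xb x) + Y x (nx y)"

lemma Xa_N[simp]: "Xa x \<in> N" unfolding Xa_def by (simp add: ops2 ops3)
lemma Xb_N[simp]: "Xb x \<in> N" unfolding Xb_def by (simp add: ops2 ops3)
lemma Y_N[simp]: "k \<in> N \<Longrightarrow> Y x k \<in> N" unfolding Y_def by (simp add: ops2 ops3)
lemma Pa_N[simp]: "Pa x \<in> N" unfolding Pa_def by (simp add: ops2 ops3)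
lemma Pb_N[simp]: "Pb x \<in> N" unfolding Pb_def by (simp add: ops2 ops3)
lemma Q_N[simp]: "k \<in> N \<Longrightarrow> Q x k \<in> N" unfolding Q_def by (simp add: ops2 ops3)
lemma prd_N[simp]: "prd x y \<in> N" unfolding prd_def by (simp add: ops2 ops3)

lemma Y_add: "k \<in> N \<Longrightarrow> l \<in> N \<Longrightarrow> Y x (k + l) = Y x k + Y x l"
  unfolding Y_def by (simp add: ops2 ops3 algebra_simps)
lemma Y_sc: "k \<in> N \<Longrightarrow> Y x (sc r k) = sc r (Y x k)"
  unfolding Y_def by (simp add: ops2 ops3 algebra_simps)
lemma Q_add: "k \<in> N \<Longrightarrow> l \<in> N \<Longrightarrow> Q x (k + l) = Q x k + Q x l"
  unfolding Q_def by (simp add: ops2 ops3 algebra_simps)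
lemma Q_sc: "k \<in> N \<Longrightarrow> Q x (sc r k) = sc r (Q x k)"
  unfolding Q_def by (simp add: ops2 ops3 algebra_simps)

lemma prd_alt: "prd x y = sc (ca x) (Pa y) + sc (cb x) (Pb y) + Q y (nx x)"
  unfolding prd_def Xa_def Xb_def Y_def Pa_def Pb_def Q_def by (simp add: ops2 ops3 algebra_simps)

lemma Y_Xa: "Y x (Xa y) = Y y (Xa x)"
  unfolding Y_def Xa_def by (simp add: ops2 ops3 algebra_simps)
lemma Y_Xb: "Y x (Xb y) = Y y (Xb x)"
  unfolding Y_def Xb_def by (simp add: ops2 ops3 algebra_simps)
lemma Y_comm: "k \<in> N \<Longrightarrow> Y x (Y y k) = Y y (Y x k)"
  unfolding Y_def by (simp add: ops2 ops3 algebra_simps)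
lemma Q_Pa: "Q z (Pa y) = Q y (Pa z)"
  unfolding Q_def Pa_def by (simp add: ops2 ops3 algebra_simps)
lemma Q_Pb: "Q z (Pb y) = 0"
  unfolding Q_def Pb_def by (simp add: ops2 ops3 algebra_simps)
lemma Q_comm: "k \<in> N \<Longrightarrow> Q z (Q y k) = Q y (Q z k)"
  unfolding Q_def by (simp add: ops2 ops3 algebra_simps)

end


context lie_ctx begin

lemma br_decomp:
  assumes m: "m \<in> N" and m': "m' \<in> N"
  shows "br (sc \<alpha> a + sc \<beta> b + m) (sc \<alpha>' a + sc \<beta>' b + m') =
    sc (\<alpha> * \<beta>') c - sc (\<alpha>' * \<beta>) c + sc \<alpha> (A m') + sc \<beta> (B m') - sc \<alpha>' (A m) - sc \<beta>' (B m)"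
proof -
  have e1: "br b a = - c" using br_anti[of a b] by (simp add: c_def)
  have e2: "br m a = - A m" using br_anti[of a m] by (simp add: A_def)
  have e3: "br m b = - B m" using br_anti[of b m] by (simp add: B_def)
  have e4: "br m m' = 0" using N_ab[OF m m'] .
  have e5: "br a m' = A m'" "br b m' = B m'" "br a b = c" by (simp_all add: A_def B_def c_def)
  show ?thesis
    by (simp add: br_add_l br_add_r br_sc_l br_sc_r br_alt e1 e2 e3 e4 e5 algebra_simps)
qed

lemma E_eq: "x \<in> N \<Longrightarrow> E x = x - F x" unfolding F_def by simp

lemma Bp_A: "x \<in> N \<Longrightarrow> Bp n (A x) = A (Bp n x)"
  by (induction n) (simp_all add: AB_comm Bp_N)
lemma Bp_F: "x \<in> N \<Longrightarrow> Bp n (F x) = F (Bp n x)"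
  by (induction n) (simp_all add: F_B Bp_N)
lemma Bp_mul: "m \<in> N \<Longrightarrow> x \<in> N \<Longrightarrow> Bp n (mul m x) = mul m (Bp n x)"
  by (induction n) (simp_all add: mul_B Bp_N)
lemma Bp_neg: "Bp n (- x) = - Bp n x"
  using Bp_sc[of n "-1" x] by simp

end

context nondeg begin

lemma vs: "vector_space sc"
  using module_axioms by (simp add: module_iff_vector_space)

lemma prd_Nl: "k \<in> N \<Longrightarrow> prd x k = Y x k"
  unfolding prd_def by simp
lemma prd_Nr: "k \<in> N \<Longrightarrow> prd k z = Q z k"
  unfolding prd_alt by simp

lemma LR_left: "prd x (prd y z) = prd y (prd x z)"
proof -
  have "prd x (prd y z) = Y x (prd y z)" by (simp add: prd_Nl)
  also have "\<dots> = sc (ca z) (Y x (Xa y)) + sc (cb z) (Y x (Xb y)) + Y x (Y y (nx z))"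
    unfolding prd_def by (simp add: Y_add Y_sc N_add N_sc)
  also have "\<dots> = sc (ca z) (Y y (Xa x)) + sc (cb z) (Y y (Xb x)) + Y y (Y x (nx z))"
    by (simp add: Y_Xa Y_Xb Y_comm)
  also have "\<dots> = Y y (prd x z)"
    unfolding prd_def by (simp add: Y_add Y_sc N_add N_sc)
  also have "\<dots> = prd y (prd x z)" by (simp add: prd_Nl)
  finally show ?thesis .
qed

lemma LR_right: "prd (prd x y) z = prd (prd x z) y"
proof -
  have "prd (prd x y) z = Q z (prd x y)" by (simp add: prd_Nr)
  also have "\<dots> = sc (ca x) (Q z (Pa y)) + sc (cb x) (Q z (Pb y)) + Q z (Q y (nx x))"
    unfolding prd_alt by (simp add: Q_add Q_sc N_add N_sc)
  also have "\<dots> = sc (ca x) (Q y (Pa z)) + sc (cb x) (Q y (Pb z)) + Q y (Q z (nx x))"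
    by (simp add: Q_Pa Q_Pb Q_comm)
  also have "\<dots> = Q y (prd x z)"
    unfolding prd_alt by (simp add: Q_add Q_sc N_add N_sc)
  also have "\<dots> = prd (prd x z) y" by (simp add: prd_Nr)
  finally show ?thesis .
qed

lemma br_cf: "br x y = br (sc (ca x) a + sc (cb x) b + nx x) (sc (ca y) a + sc (cb y) b + nx y)"
  by (rule arg_cong2[where f=br], rule cf_eq, rule cf_eq)

lemma LR_anti: "prd x y - prd y x = br x y"
proof -
  have e: "br x y = sc (ca x * cb y) c - sc (ca y * cb x) c + sc (ca x) (A (nx y)) + sc (cb x) (B (nx y))
     - sc (ca y) (A (nx x)) - sc (cb y) (B (nx x))"
    by (subst br_cf) (rule br_decomp[OF nx_N nx_N])
  show ?thesis
    unfolding e prd_def Xa_def Xb_def Y_def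
    by (simp add: E_eq A_add A_sc A_diff A_neg B_add B_sc B_diff B_neg F_add F_sc F_diff F_neg
      F_F mul_comm' A_N B_N F_N mul_N N_add N_diff N_sc N_neg c_N algebra_simps)
qed

lemma prd_add_r: "prd x (y + z) = prd x y + prd x z"
  unfolding prd_def using cf_add[of y z] by (simp add: Y_add algebra_simps scale_left_distrib)
lemma prd_sc_r: "prd x (sc r y) = sc r (prd x y)"
  unfolding prd_def using cf_sc[of r y] by (simp add: Y_sc algebra_simps)
lemma prd_add_l: "prd (y + z) x = prd y x + prd z x"
  unfolding prd_alt using cf_add[of y z] by (simp add: Q_add algebra_simps scale_left_distrib)
lemma prd_sc_l: "prd (sc r y) x = sc r (prd y x)"
  unfolding prd_alt using cf_sc[of r y] by (simp add: Q_sc algebra_simps)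

lemma prd_bilinear: "bilinear_map sc prd"
  unfolding bilinear_map_def Vector_Spaces.linear_iff
  using vs prd_add_r prd_sc_r prd_add_l prd_sc_l by blast

lemma Q_form: "k \<in> N \<Longrightarrow> Q y k = B (F (- sc (cb y) k - A (mul (nx y) k)))"
  unfolding Q_def by (simp add: ops2 ops3 algebra_simps)

lemma Q_step:
  assumes v: "v \<in> N"
  shows "Q y (Bp n (F v)) = Bp (Suc n) (F (- sc (cb y) v - A (mul (nx y) v)))"
proof -
  define u where "u = Bp n (F v)"
  define g where "g = - sc (cb y) v - A (mul (nx y) v)"
  have u: "u \<in> N" unfolding u_def using v F_N Bp_N by blast
  have g: "g \<in> N" unfolding g_def using v by (simp add: ops2)
  have h1: "- sc (cb y) u - A (mul (nx y) u) = Bp n (- sc (cb y) (F v) - A (mul (nx y) (F v)))"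
    unfolding u_def using v by (simp add: Bp_diff Bp_neg Bp_sc Bp_A Bp_mul F_N mul_N A_N)
  have h2: "- sc (cb y) (F v) - A (mul (nx y) (F v)) = F g"
    unfolding g_def using v by (simp add: ops2 ops3)
  have "Q y u = B (F (Bp n (F g)))" using Q_form[OF u] h1 h2 by simp
  also have "\<dots> = B (Bp n (F (F g)))" using Bp_F[of "F g" n] g F_N by simp
  also have "\<dots> = Bp (Suc n) (F g)" using F_F[OF g] by simp
  finally show ?thesis unfolding u_def g_def .
qed

lemma Q_pow: "k \<in> N \<Longrightarrow> \<exists>v\<in>N. (Q y ^^ Suc j) k = Bp (Suc j) (F v)"
proof (induction j arbitrary: k)
  case 0
  then show ?case using Q_form[OF 0] by (intro bexI[of _ "- sc (cb y) k - A (mul (nx y) k)"]) (simp_all add: ops2)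
next
  case (Suc j)
  obtain v where v: "v \<in> N" "(Q y ^^ Suc j) k = Bp (Suc j) (F v)" using Suc by blast
  have "(Q y ^^ Suc (Suc j)) k = Q y (Bp (Suc j) (F v))" using v by simp
  also have "\<dots> = Bp (Suc (Suc j)) (F (- sc (cb y) v - A (mul (nx y) v)))"
    by (rule Q_step[OF v(1)])
  finally show ?case using v by (intro bexI[of _ "- sc (cb y) v - A (mul (nx y) v)"]) (simp_all add: ops2)
qed

lemma prd_complete: "\<exists>n. ((\<lambda>x. prd x y) ^^ n) = (\<lambda>_. 0)"
proof (intro exI[of _ "Suc (Suc KK)"] ext)
  fix x
  let ?R = "\<lambda>x. prd x y"
  have QN: "k \<in> N \<Longrightarrow> (Q y ^^ n) k \<in> N" for k n
    by (induction n) simp_all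
  have RQ: "k \<in> N \<Longrightarrow> (?R ^^ n) k = (Q y ^^ n) k" for k n
    by (induction n) (simp_all add: prd_Nr QN)
  have "(?R ^^ Suc (Suc KK)) x = (?R ^^ Suc KK) (prd x y)" by (simp only: funpow_Suc_right o_apply)
  also have "\<dots> = (Q y ^^ Suc KK) (prd x y)" using RQ prd_N by blast
  also obtain v where "v \<in> N" "(Q y ^^ Suc KK) (prd x y) = Bp (Suc KK) (F v)" using Q_pow prd_N by blast
  then have "(Q y ^^ Suc KK) (prd x y) = 0" using BpF by simp
  finally show "(?R ^^ Suc (Suc KK)) x = 0" .
qed

lemma prd_complete_LR: "complete_LR_structure sc br prd"
  unfolding complete_LR_structure_def LR_structure_def
  using prd_bilinear LR_left LR_right LR_anti prd_complete by blast

end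


locale onegen = lie_ctx sc br a b Bs
  for sc :: "'k::field \<Rightarrow> 'v::ab_group_add \<Rightarrow> 'v" and br a b Bs +
  fixes x0 :: 'v
  assumes x0_dec: "\<exists>t m. m \<in> N \<and> x = sc t x0 + m"
  and x0_notN: "x0 \<notin> N"
  and x0_br: "m \<in> N \<Longrightarrow> br x0 m \<in> N"
begin

definition ct :: "'v \<Rightarrow> 'k" where "ct x = (SOME t. \<exists>m. m \<in> N \<and> x = sc t x0 + m)"

lemma ct_spec: "x - sc (ct x) x0 \<in> N"
proof -
  have "\<exists>m. m \<in> N \<and> x = sc (ct x) x0 + m"
    unfolding ct_def by (rule someI_ex) (rule x0_dec)
  then obtain m where m: "m \<in> N" "x = sc (ct x) x0 + m" by blast
  have "x - sc (ct x) x0 = (sc (ct x) x0 + m) - sc (ct x) x0"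
    by (rule arg_cong[where f="\<lambda>z. z - sc (ct x) x0"]) (rule m(2))
  then show ?thesis using m(1) by simp
qed

lemma ct_uniq: assumes "m \<in> N" "x = sc t x0 + m" shows "ct x = t"
proof (rule ccontr)
  assume ne: "ct x \<noteq> t"
  have "sc (t - ct x) x0 = (x - sc (ct x) x0) - m" using assms by (simp add: algebra_simps scale_left_diff_distrib)
  then have "sc (t - ct x) x0 \<in> N" using ct_spec assms N_diff by metis
  then have "sc (inverse (t - ct x)) (sc (t - ct x) x0) \<in> N" using N_sc by blast
  then have "x0 \<in> N" using ne by simp
  then show False using x0_notN by blast
qed

lemma ct_N: "k \<in> N \<Longrightarrow> ct k = 0"
  by (rule ct_uniq) simp_all

lemma ct_add: "ct (x + y) = ct x + ct y"
proof (rule ct_uniq)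
  show "(x - sc (ct x) x0) + (y - sc (ct y) x0) \<in> N" using ct_spec N_add by blast
  show "x + y = sc (ct x + ct y) x0 + ((x - sc (ct x) x0) + (y - sc (ct y) x0))"
    by (simp add: scale_left_distrib algebra_simps)
qed

lemma ct_sc: "ct (sc r x) = r * ct x"
proof (rule ct_uniq)
  show "sc r (x - sc (ct x) x0) \<in> N" using ct_spec N_sc by blast
  show "sc r x = sc (r * ct x) x0 + sc r (x - sc (ct x) x0)"
    by (simp add: scale_right_diff_distrib)
qed

definition pg :: "'v \<Rightarrow> 'v \<Rightarrow> 'v" where "pg x y = sc (ct x) (br x0 y)"

lemma br_x0: "br x0 y = br x0 (y - sc (ct y) x0)"
  by (simp add: br_diff_r br_sc_r br_alt)

lemma brx0_N: "br x0 y \<in> N"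
  using br_x0 x0_br ct_spec by metis

lemma pg_N: "pg x y \<in> N" unfolding pg_def using brx0_N N_sc by blast

lemma vs1: "vector_space sc"
  using module_axioms by (simp add: module_iff_vector_space)

lemma pg_complete: "complete_LR_structure sc br pg"
  unfolding complete_LR_structure_def LR_structure_def
proof (intro conjI allI)
  show "bilinear_map sc pg"
    unfolding bilinear_map_def Vector_Spaces.linear_iff pg_def
    by (simp add: vs1 br_add_r br_sc_r ct_add ct_sc scale_left_distrib scale_right_distrib)
next
  fix x y z
  show "pg x (pg y z) = pg y (pg x z)" unfolding pg_def by (simp add: br_sc_r mult.commute)
  show "pg (pg x y) z = pg (pg x z) y" unfolding pg_def using ct_N[OF brx0_N] ct_sc by simp
next
  fix x y
  define m where "m = x - sc (ct x) x0"
  define m' where "m' = y - sc (ct y) x0"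
  have m: "m \<in> N" and m': "m' \<in> N" unfolding m_def m'_def using ct_spec by blast+
  have ex: "x = sc (ct x) x0 + m" and ey: "y = sc (ct y) x0 + m'" unfolding m_def m'_def by simp_all
  have "br x y = br (sc (ct x) x0 + m) (sc (ct y) x0 + m')" using ex ey by simp
  also have "\<dots> = sc (ct x) (br x0 m') - sc (ct y) (br x0 m)"
    using N_ab[OF m m'] br_anti[of x0 m]
    by (simp add: br_add_l br_add_r br_sc_l br_sc_r br_alt)
  also have "\<dots> = pg x y - pg y x"
    unfolding pg_def using br_x0[of x] br_x0[of y] unfolding m_def m'_def by simp
  finally show "pg x y - pg y x = br x y" by simp
next
  fix y
  show "\<exists>n. (\<lambda>x. pg x y) ^^ n = (\<lambda>_. 0)"
  proof (intro exI[of _ 2] ext)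
    fix x
    show "((\<lambda>x. pg x y) ^^ 2) x = 0"
      unfolding numeral_2_eq_2 using ct_N[OF pg_N] by (simp add: pg_def)
  qed
qed

end

context lie_ctx begin

lemma exists_complete: "\<exists>p. complete_LR_structure sc br p"
proof (cases "\<forall>\<alpha> \<beta>. sc \<alpha> a + sc \<beta> b \<in> N \<longrightarrow> \<alpha> = 0 \<and> \<beta> = 0")
  case True
  interpret nondeg sc br a b Bs
    by unfold_locales (use True in blast)
  show ?thesis using prd_complete_LR by blast
next
  case False
  then obtain \<alpha> \<beta> where ab: "sc \<alpha> a + sc \<beta> b \<in> N" "\<alpha> \<noteq> 0 \<or> \<beta> \<noteq> 0" by blast
  have "\<exists>x0\<in>{a, b}. \<forall>x. \<exists>t m. m \<in> N \<and> x = sc t x0 + m"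
  proof (cases "\<alpha> = 0")
    case True
    then have bN: "b \<in> N" using ab N_sc[of "sc \<beta> b" "inverse \<beta>"] by simp
    show ?thesis
    proof (intro bexI[of _ a] allI)
      fix x
      obtain \<alpha>1 \<beta>1 m1 where "m1 \<in> N" "x = sc \<alpha>1 a + sc \<beta>1 b + m1" using decomp by blast
      then show "\<exists>t m. m \<in> N \<and> x = sc t a + m"
        using bN N_add N_sc by (intro exI[of _ \<alpha>1] exI[of _ "sc \<beta>1 b + m1"]) (simp add: add.assoc)
    qed simp
  next
    case False
    show ?thesis
    proof (intro bexI[of _ b] allI)
      fix x
      obtain \<alpha>1 \<beta>1 m1 where m1: "m1 \<in> N" "x = sc \<alpha>1 a + sc \<beta>1 b + m1" using decomp by blast
      define n0 where "n0 = sc \<alpha> a + sc \<beta> b"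
      have "sc (\<alpha>1 / \<alpha>) n0 = sc \<alpha>1 a + sc (\<alpha>1 / \<alpha> * \<beta>) b"
        unfolding n0_def using False by (simp add: scale_right_distrib)
      then have "x = sc (\<beta>1 - \<alpha>1 / \<alpha> * \<beta>) b + (m1 + sc (\<alpha>1 / \<alpha>) n0)"
        using m1 by (simp add: algebra_simps scale_left_diff_distrib)
      moreover have "m1 + sc (\<alpha>1 / \<alpha>) n0 \<in> N" using m1 ab N_add N_sc unfolding n0_def by blast
      ultimately show "\<exists>t m. m \<in> N \<and> x = sc t b + m" by blast
    qed simp
  qed
  then obtain x0 where x0: "x0 \<in> {a, b}" "\<And>x. \<exists>t m. m \<in> N \<and> x = sc t x0 + m" by blast
  show ?thesis
  proof (cases "x0 \<in> N")
    case True
    have allN: "x \<in> N" for x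
    proof -
      obtain t m where "m \<in> N" "x = sc t x0 + m" using x0 by blast
      then show ?thesis using True N_add N_sc by blast
    qed
    have "complete_LR_structure sc br (\<lambda>x y. 0)"
      unfolding complete_LR_structure_def LR_structure_def bilinear_map_def Vector_Spaces.linear_iff
      using allN N_ab module_axioms by (auto simp: module_iff_vector_space intro!: exI[of _ 1])
    then show ?thesis by blast
  next
    case False
    interpret onegen sc br a b Bs x0
    proof unfold_locales
      show "\<exists>t m. m \<in> N \<and> x = sc t x0 + m" for x using x0 by blast
      show "x0 \<notin> N" using False .
      show "m \<in> N \<Longrightarrow> br x0 m \<in> N" for m using x0(1) A_N B_N unfolding A_def B_def by auto
    qed
    show ?thesis using pg_complete by blast
  qed
qed

end

theorem theorem4p3:
  fixes sc :: "'k::field_char_0 \<Rightarrow> 'v::ab_group_add \<Rightarrow> 'v"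
    and br :: "'v \<Rightarrow> 'v \<Rightarrow> 'v"
  assumes "lie_algebra sc br"
    and "finite_dim sc"
    and "two_step_solvable sc br"
    and "\<exists>a b. generated_subalgebra sc br {a, b} = UNIV"
  shows "\<exists>p. complete_LR_structure sc br p"
proof -
  obtain a b where gen: "generated_subalgebra sc br {a, b} = UNIV" using assms(4) by blast
  obtain Bs where Bs: "finite Bs" "module.span sc Bs = UNIV" using assms(2) unfolding finite_dim_def by blast
  have vs: "vector_space sc" and bil: "bilinear_map sc br" and alt: "\<forall>x. br x x = 0"
    and jac: "\<forall>x y z. br x (br y z) + br y (br z x) + br z (br x y) = 0"
    using assms(1) unfolding lie_algebra_def by blast+
  have l1: "\<forall>x. Vector_Spaces.linear sc sc (br x)" and l2: "\<forall>y. Vector_Spaces.linear sc sc (\<lambda>x. br x y)"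
    using bil unfolding bilinear_map_def by blast+
  interpret lie_ctx sc br a b Bs
  proof (rule lie_ctx.intro[OF vs], unfold_locales)
    show "br x (y + z) = br x y + br x z" for x y z using l1 unfolding Vector_Spaces.linear_iff by blast
    show "br (x + y) z = br x z + br y z" for x y z using l2 unfolding Vector_Spaces.linear_iff by blast
    show "br x (sc r y) = sc r (br x y)" for x r y using l1 unfolding Vector_Spaces.linear_iff by blast
    show "br (sc r x) y = sc r (br x y)" for x r y using l2 unfolding Vector_Spaces.linear_iff by blast
    show "br x x = 0" for x using alt by blast
    show "br x (br y z) + br y (br z x) + br z (br x y) = 0" for x y z using jac by blast
    show "x \<in> derived sc br \<Longrightarrow> y \<in> derived sc br \<Longrightarrow> br x y = 0" for x y
      using assms(3) unfolding two_step_solvable_def by blast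
    show "finite Bs" by (rule Bs(1))
    show "module.span sc Bs = UNIV" by (rule Bs(2))
    show "generated_subalgebra sc br {a, b} = UNIV" by (rule gen)
  qed
  show ?thesis by (rule exists_complete)
qed


end
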